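(* Let $u\in V$ and let $N\subseteq V\setminus\{u\}$ be a nonempty set of vertices, and let $0<\alpha<1$. Suppose that $p_{uv}>0$ and $q^*_{uv}/p_{uv}<\alpha$ for every $v\in N$, and that $Q:=\sum_{v\in N} q^*_{uv}>0$. Put $$\delta=\frac{1-\exp\left(-Q/\alpha\right)}{Q}.$$ Then there is a probability distribution over orderings $\pi$ of $N$ such that, if $\pi$ is drawn from it independently of $G$ and the pairs $\{u,v\}$, $v\in N$, are inspected in the order $\pi$, then for every $v\in N$ the probability that $\{u,v\}$ is the first inspected pair that is an edge of $G$ is at least $\delta\, q^*_{uv}$.
   Context: Let $V$ be a finite vertex set with, for every unordered pair $\{u,v\}$ of distinct vertices, a probability $p_{uv}\in[0,1]$; let $\mathcal D$ be the distribution of the random graph $G$ on $V$ in which each pair $\{u,v\}$ is an edge independently with probability $p_{uv}$. Fix a rule $M$ assigning to every graph $H$ on $V$ a maximum matching $M(H)$ of $H$. Define $q^*_{uv}=\Pr_{H\sim\mathcal D}(\{u,v\}\in M(H))$. *)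

theory Defs
  imports "HOL-Probability.Probability"
begin

definition vpairs :: "'a set \<Rightarrow> 'a set set" where
  "vpairs V = {{x, y} | x y. x \<in> V \<and> y \<in> V \<and> x \<noteq> y}"

text \<open>The random graph D on V: each pair e is an edge independently with probability p e.
  A graph is represented by its edge set.\<close>
definition random_graph :: "'a set \<Rightarrow> ('a set \<Rightarrow> real) \<Rightarrow> 'a set set pmf" where
  "random_graph V p =
     map_pmf (\<lambda>b. {e \<in> vpairs V. b e}) (Pi_pmf (vpairs V) False (\<lambda>e. bernoulli_pmf (p e)))"

definition is_matching :: "'a set set \<Rightarrow> 'a set set \<Rightarrow> bool" where
  "is_matching H M \<longleftrightarrow> M \<subseteq> H \<and> (\<forall>e\<in>M. \<forall>f\<in>M. e \<noteq> f \<longrightarrow> e \<inter> f = {})"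

definition is_max_matching :: "'a set set \<Rightarrow> 'a set set \<Rightarrow> bool" where
  "is_max_matching H M \<longleftrightarrow> is_matching H M \<and> (\<forall>M'. is_matching H M' \<longrightarrow> card M' \<le> card M)"

definition qstar :: "'a set \<Rightarrow> ('a set \<Rightarrow> real) \<Rightarrow> ('a set set \<Rightarrow> 'a set set) \<Rightarrow> 'a set \<Rightarrow> real" where
  "qstar V p M e = measure_pmf.prob (random_graph V p) {H. e \<in> M H}"

definition orderings :: "'a set \<Rightarrow> 'a list set" where
  "orderings N = {xs. distinct xs \<and> set xs = N}"

definition first_edge :: "'a \<Rightarrow> 'a list \<Rightarrow> 'a set set \<Rightarrow> 'a option" where
  "first_edge u xs H = find (\<lambda>w. {u, w} \<in> H) xs"

end

theory Submission
  imports Defs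
begin

lemma prob_pair_pmf_integral:
  fixes A :: "'a pmf" and B :: "'b pmf" and g :: "'a \<Rightarrow> real"
  assumes g: "\<And>a. measure_pmf.prob B {b. (a,b)\<in>E} = g a"
    and int: "integrable (measure_pmf A) g"
  shows "measure_pmf.prob (pair_pmf A B) E = measure_pmf.expectation A g"
proof -
  have gnn: "\<And>a. 0 \<le> g a" using g by (metis measure_nonneg)
  have "ennreal (measure_pmf.prob (pair_pmf A B) E) = emeasure (pair_pmf A B) E"
    by (simp add: measure_pmf.emeasure_eq_measure)
  also have "\<dots> = (\<integral>\<^sup>+x. indicator E x \<partial>pair_pmf A B)"
    by simp
  also have "\<dots> = (\<integral>\<^sup>+a. \<integral>\<^sup>+b. indicator E (a,b) \<partial>B \<partial>A)"
    by (rule nn_integral_pair_pmf')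
  also have "\<dots> = (\<integral>\<^sup>+a. ennreal (g a) \<partial>A)"
  proof (intro nn_integral_cong)
    fix a
    have "(\<integral>\<^sup>+b. indicator E (a,b) \<partial>B) = (\<integral>\<^sup>+b. indicator {b. (a,b)\<in>E} b \<partial>B)"
      by (intro nn_integral_cong) (auto split: split_indicator)
    also have "\<dots> = emeasure B {b. (a,b)\<in>E}" by simp
    also have "\<dots> = ennreal (g a)" using g[of a] by (simp add: measure_pmf.emeasure_eq_measure)
    finally show "(\<integral>\<^sup>+b. indicator E (a,b) \<partial>B) = ennreal (g a)" .
  qed
  also have "\<dots> = ennreal (measure_pmf.expectation A g)"
    by (intro nn_integral_eq_integral int) (auto simp: gnn)
  finally show ?thesis
    by (subst (asm) ennreal_inj) (auto intro: Bochner_Integration.integral_nonneg gnn)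
qed

lemma find_split:
  assumes "\<forall>w\<in>set as. \<not> P w" "P v"
  shows "find P (as @ v # bs) = Some v"
  using assms by (induction as) auto

lemma find_sorted:
  fixes k :: "'a \<Rightarrow> nat"
  assumes "v \<in> set xs" "distinct xs" "P v"
    and "\<And>w. w \<in> set xs \<Longrightarrow> w \<noteq> v \<Longrightarrow> k w \<le> k v \<Longrightarrow> \<not> P w"
  shows "find P (sort_key k xs) = Some v"
proof -
  let ?ys = "sort_key k xs"
  have "v \<in> set ?ys" using assms by simp
  then obtain as bs where ys: "?ys = as @ v # bs" by (meson split_list)
  have d: "distinct ?ys" using assms by simp
  have s: "sorted (map k ?ys)" by simp
  have "\<forall>w\<in>set as. \<not> P w"
  proof
    fix w assume w: "w \<in> set as"
    have "w \<noteq> v" using d ys w by auto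
    moreover have "w \<in> set xs" using w ys by (metis Un_iff set_append set_sort)
    moreover have "k w \<le> k v" using s ys w by (auto simp: sorted_append)
    ultimately show "\<not> P w" using assms(4) by blast
  qed
  then show ?thesis using ys find_split assms(3) by metis
qed

definition kpmf :: "nat \<Rightarrow> real \<Rightarrow> real \<Rightarrow> nat \<Rightarrow> real" where
  "kpmf K a p i = (if i < K then (a^i - a^Suc i)/p else if i = K then 1 - (1 - a^K)/p else 0)"

definition Kd :: "nat \<Rightarrow> real \<Rightarrow> real \<Rightarrow> nat pmf" where
  "Kd K a p = embed_pmf (kpmf K a p)"

locale kd =
  fixes K :: nat and a p :: real
  assumes a0: "0 < a" and a1: "a \<le> 1" and p0: "0 < p" and pK: "1 - a^K \<le> p"
begin

lemma kpmf_nonneg: "0 \<le> kpmf K a p i"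
proof -
  have "a^Suc i \<le> a^i" using a0 a1 by (simp add: mult_left_le_one_le)
  moreover have "(1 - a^K)/p \<le> 1" using pK p0 by simp
  ultimately show ?thesis using p0 by (auto simp: kpmf_def)
qed

lemma sum_part: "(\<Sum>i<n. (a^i - a^Suc i)) = 1 - a^n"
  using sum_lessThan_telescope'[of "\<lambda>i. a^i" n] by simp

lemma kpmf_sum: "(\<Sum>i\<in>{..K}. kpmf K a p i) = 1"
proof -
  have "(\<Sum>i\<in>{..K}. kpmf K a p i) = (\<Sum>i<K. kpmf K a p i) + kpmf K a p K"
    by (simp add: lessThan_Suc_atMost[symmetric])
  also have "(\<Sum>i<K. kpmf K a p i) = (\<Sum>i<K. (a^i - a^Suc i)/p)"
    by (intro sum.cong) (auto simp: kpmf_def)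
  also have "\<dots> = (\<Sum>i<K. (a^i - a^Suc i))/p" by (simp only: sum_divide_distrib)
  also have "\<dots> = (1 - a^K)/p" by (simp only: sum_part)
  finally show ?thesis by (simp add: kpmf_def)
qed

lemma kpmf_sum_le: "j < K \<Longrightarrow> (\<Sum>i\<in>{..j}. kpmf K a p i) = (1 - a^Suc j)/p"
proof -
  assume j: "j < K"
  have "(\<Sum>i\<in>{..j}. kpmf K a p i) = (\<Sum>i<Suc j. (a^i - a^Suc i)/p)"
    using j by (intro sum.cong) (auto simp: kpmf_def lessThan_Suc_atMost)
  also have "\<dots> = (\<Sum>i<Suc j. (a^i - a^Suc i))/p" by (simp only: sum_divide_distrib)
  also have "\<dots> = (1 - a^Suc j)/p" by (simp only: sum_part)
  finally show ?thesis .
qed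

lemma pmf_Kd: "pmf (Kd K a p) i = kpmf K a p i"
  unfolding Kd_def
proof (rule pmf_embed_pmf)
  show "\<And>x. 0 \<le> kpmf K a p x" by (rule kpmf_nonneg)
  have "(\<integral>\<^sup>+x. ennreal (kpmf K a p x) \<partial>count_space UNIV) = (\<Sum>x\<in>{..K}. ennreal (kpmf K a p x))"
    by (intro nn_integral_count_space') (auto simp: kpmf_def)
  also have "\<dots> = ennreal (\<Sum>x\<in>{..K}. kpmf K a p x)"
    by (intro sum_ennreal) (simp add: kpmf_nonneg)
  also have "\<dots> = 1" by (simp add: kpmf_sum)
  finally show "(\<integral>\<^sup>+x. ennreal (kpmf K a p x) \<partial>count_space UNIV) = 1" .
qed

lemma set_Kd: "set_pmf (Kd K a p) \<subseteq> {..K}"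
  by (auto simp: set_pmf_eq pmf_Kd kpmf_def split: if_splits)

lemma int_Kd: "measure_pmf.expectation (Kd K a p) f = (\<Sum>i\<in>{..K}. kpmf K a p i * f i)"
  by (subst integral_measure_pmf[of "{..K}"]) (use set_Kd in \<open>auto simp: pmf_Kd\<close>)

lemma integrable_Kd: "integrable (measure_pmf (Kd K a p)) (f :: nat \<Rightarrow> real)"
  by (rule integrable_measure_pmf_finite) (meson finite_atMost finite_subset set_Kd)

lemma E1: "j < K \<Longrightarrow> measure_pmf.expectation (Kd K a p) (\<lambda>t. if t = j then p else 0) = a^j - a^Suc j"
proof -
  assume j: "j < K"
  have "measure_pmf.expectation (Kd K a p) (\<lambda>t. if t = j then p else 0)
     = (\<Sum>i\<in>{..K}. kpmf K a p i * (if i = j then p else 0))"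
    by (rule int_Kd)
  also have "\<dots> = (\<Sum>i\<in>{..K}. if i = j then kpmf K a p i * p else 0)"
    by (rule sum.cong) auto
  also have "\<dots> = kpmf K a p j * p" using j by (simp only: sum.delta finite_atMost) simp
  finally show ?thesis using j p0 by (simp add: kpmf_def)
qed

lemma E2: assumes j: "j < K"
  shows "measure_pmf.expectation (Kd K a p) (\<lambda>t. if t \<le> j then 1 - p else 1) = a^Suc j"
proof -
  have "measure_pmf.expectation (Kd K a p) (\<lambda>t. if t \<le> j then 1 - p else 1)
      = (\<Sum>i\<in>{..K}. kpmf K a p i - p * (if i \<le> j then kpmf K a p i else 0))"
    by (subst int_Kd) (auto intro!: sum.cong simp: algebra_simps)
  also have "\<dots> = 1 - p * (\<Sum>i\<in>{..K}. if i \<le> j then kpmf K a p i else 0)"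
    by (simp add: sum_subtractf sum_distrib_left kpmf_sum)
  also have "(\<Sum>i\<in>{..K}. if i \<le> j then kpmf K a p i else 0) = (\<Sum>i\<in>{..j}. kpmf K a p i)"
    using j by (subst sum.inter_filter[symmetric]) (auto intro!: sum.cong)
  also have "\<dots> = (1 - a^Suc j)/p" using j by (rule kpmf_sum_le)
  finally show ?thesis using p0 by simp
qed

end

lemma num_bound:
  fixes x y d :: real and K :: nat
  assumes x: "0 \<le> x" and y: "0 < y" and d: "0 < d"
    and key: "exp (-y*d) * (1 - exp (-y*(K*d))) \<ge> 1 - exp (-y)"
  shows "(\<Sum>j<K. (exp(-x*d)^j - exp(-x*d)^Suc j) * exp(-(y-x)*d)^Suc j) \<ge> x*(1-exp(-y))/y"
proof -
  define r where "r = exp (-y*d)"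
  have tm: "(exp(-x*d)^j - exp(-x*d)^Suc j) * exp(-(y-x)*d)^Suc j = (exp (x*d) - 1) * r^Suc j" for j
  proof -
    define B where "B = exp(-x*d)"
    define C where "C = exp(-(y-x)*d)"
    have BC: "r = B*C" by (simp add: r_def B_def C_def exp_add[symmetric] algebra_simps)
    have EB: "exp (x*d) * B = 1" by (simp add: B_def exp_add[symmetric])
    have "(exp (x*d) - 1) * r^Suc j = (exp (x*d) * B - B) * B^j * C^Suc j"
      by (simp add: BC power_mult_distrib algebra_simps)
    also have "\<dots> = (B^j - B^Suc j) * C^Suc j" using EB by (simp add: algebra_simps mult.commute)
    finally show ?thesis by (simp add: B_def C_def)
  qed
  have r0: "0 < r" and r1: "r < 1" using y d by (auto simp: r_def)
  have sumr: "(\<Sum>j<K. r^Suc j) = r * (1 - r^K) / (1 - r)"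
    using r1 by (simp add: sum_distrib_left[symmetric] sum_gp_strict)
  have rK: "r^K = exp (-y*(K*d))"
    by (simp add: r_def exp_of_nat_mult[symmetric] algebra_simps)
  have "1 - r \<le> y*d" using exp_ge_add_one_self[of "-y*d"] by (simp add: r_def)
  moreover have "0 < 1 - r" using r1 by simp
  moreover have rKnn: "0 \<le> r * (1 - r^K)" using r0 r1 by (simp add: power_le_one)
  ultimately have B: "r * (1 - r^K) / (y*d) \<le> r * (1 - r^K) / (1 - r)"
    by (intro divide_left_mono) (auto intro: mult_pos_pos y d)
  have key': "1 - exp (-y) \<le> r * (1 - r^K)" using key unfolding rK unfolding r_def .
  have A: "x*d \<le> exp (x*d) - 1" using exp_ge_add_one_self[of "x*d"] by linarith
  have "x*(1-exp(-y))/y \<le> x * (r * (1 - r^K)) / y"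
    using key' x y by (intro divide_right_mono mult_left_mono) auto
  also have "\<dots> = (x*d) * (r * (1 - r^K) / (y*d))" using d y by (simp add: field_simps)
  also have "\<dots> \<le> (exp (x*d) - 1) * (r * (1 - r^K) / (1 - r))"
    using A B x d rKnn y by (intro mult_mono) auto
  also have "\<dots> = (\<Sum>j<K. (exp(-x*d)^j - exp(-x*d)^Suc j) * exp(-(y-x)*d)^Suc j)"
    by (simp only: tm sum_distrib_left[symmetric] sumr)
  finally show ?thesis .
qed

lemma finite_vpairs: "finite V \<Longrightarrow> finite (vpairs V)"
  by (rule finite_subset[of _ "Pow V"]) (auto simp: vpairs_def)

lemma upair_in_vpairs: "u \<in> V \<Longrightarrow> w \<in> V \<Longrightarrow> u \<noteq> w \<Longrightarrow> {u, w} \<in> vpairs V"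
  by (auto simp: vpairs_def)

lemma inj_upair: "inj_on (\<lambda>w. {u, w}) N"
  by (auto simp: inj_on_def doubleton_eq_iff)

lemma bits_prob:
  fixes k :: "'a \<Rightarrow> nat"
  assumes V: "finite V" and p: "\<forall>e\<in>vpairs V. 0 \<le> p e \<and> p e \<le> 1"
    and u: "u \<in> V" and N: "N \<subseteq> V - {u}" and v: "v \<in> N"
  shows "measure_pmf.prob (Pi_pmf (vpairs V) False (\<lambda>e. bernoulli_pmf (p e)))
           {b. k v = j \<and> b {u,v} \<and> (\<forall>w\<in>N-{v}. k w \<le> j \<longrightarrow> \<not> b {u,w})}
         = (\<Prod>w\<in>N. if w = v then (if k w = j then p {u,w} else 0)
                    else (if k w \<le> j then 1 - p {u,w} else 1))"
    (is "?lhs = ?rhs")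
proof (cases "k v = j")
  case False
  have "?rhs = 0"
    using v False finite_subset[OF N] V by (intro prod_zero) auto
  then show ?thesis using False by simp
next
  case True
  define Bs where "Bs = (\<lambda>e. if e = {u,v} then {True}
       else if (\<exists>w\<in>N-{v}. e = {u,w} \<and> k w \<le> j) then {False} else (UNIV :: bool set))"
  have uw: "\<And>w. w \<in> N \<Longrightarrow> {u,w} \<in> vpairs V" using N u by (auto intro!: upair_in_vpairs)
  have eq: "{b. k v = j \<and> b {u,v} \<and> (\<forall>w\<in>N-{v}. k w \<le> j \<longrightarrow> \<not> b {u,w})} = Pi (vpairs V) Bs"
  proof (intro equalityI subsetI)
    fix b assume b: "b \<in> {b. k v = j \<and> b {u,v} \<and> (\<forall>w\<in>N-{v}. k w \<le> j \<longrightarrow> \<not> b {u,w})}"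
    show "b \<in> Pi (vpairs V) Bs"
      unfolding Pi_def Bs_def using b by auto
  next
    fix b assume b: "b \<in> Pi (vpairs V) Bs"
    have "b {u,v} \<in> Bs {u,v}" using b uw[OF v] by auto
    hence 1: "b {u,v}" by (simp add: Bs_def)
    have 2: "\<not> b {u,w}" if "w \<in> N - {v}" "k w \<le> j" for w
    proof -
      have "{u,w} \<noteq> {u,v}" using that by (auto simp: doubleton_eq_iff)
      moreover have "b {u,w} \<in> Bs {u,w}" using b uw that by auto
      moreover have "\<exists>w'\<in>N-{v}. {u,w} = {u,w'} \<and> k w' \<le> j" using that by blast
      ultimately show ?thesis unfolding Bs_def by auto
    qed
    show "b \<in> {b. k v = j \<and> b {u,v} \<and> (\<forall>w\<in>N-{v}. k w \<le> j \<longrightarrow> \<not> b {u,w})}"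
      using 1 2 True by auto
  qed
  define h where "h = (\<lambda>e. measure_pmf.prob (bernoulli_pmf (p e)) (Bs e))"
  have "?lhs = (\<Prod>e\<in>vpairs V. h e)"
    unfolding eq h_def by (rule measure_Pi_pmf_Pi) (rule finite_vpairs[OF V])
  also have "\<dots> = (\<Prod>e\<in>(\<lambda>w. {u,w}) ` N. h e)"
  proof (rule prod.mono_neutral_right)
    show "finite (vpairs V)" by (rule finite_vpairs[OF V])
    show "(\<lambda>w. {u, w}) ` N \<subseteq> vpairs V" using uw by auto
    show "\<forall>i\<in>vpairs V - (\<lambda>w. {u, w}) ` N. h i = 1"
      using v by (auto simp: h_def Bs_def)
  qed
  also have "\<dots> = (\<Prod>w\<in>N. h {u,w})"
    by (rule prod.reindex[OF inj_upair, unfolded comp_def])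
  also have "\<dots> = ?rhs"
  proof (rule prod.cong[OF refl])
    fix w assume w: "w \<in> N"
    have pw: "0 \<le> p {u,w}" "p {u,w} \<le> 1" using p uw[OF w] by auto
    show "h {u,w} = (if w = v then (if k w = j then p {u,w} else 0)
                    else (if k w \<le> j then 1 - p {u,w} else 1))"
    proof (cases "w = v")
      case True
      then show ?thesis using pw \<open>k v = j\<close> by (simp add: h_def Bs_def measure_pmf_single)
    next
      case False
      have ne: "{u,w} \<noteq> {u,v}" using False by (auto simp: doubleton_eq_iff)
      have ex: "(\<exists>w'\<in>N-{v}. {u,w} = {u,w'} \<and> k w' \<le> j) \<longleftrightarrow> k w \<le> j"
        using w False by (auto simp: doubleton_eq_iff)
      have "measure_pmf.prob (bernoulli_pmf (p {u,w})) {False} = 1 - p {u,w}"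
        using pw by (simp add: measure_pmf_single)
      then show ?thesis using False ne ex by (auto simp: h_def Bs_def)
    qed
  qed
  finally show ?thesis .
qed

lemma exK:
  fixes y T :: real
  assumes y: "0 < y" and T: "1 < T"
  shows "\<exists>K::nat. 0 < K \<and> exp (-y*(T/K)) * (1 - exp (-y*(real K*(T/K)))) \<ge> 1 - exp (-y)"
proof -
  define \<rho> where "\<rho> = (1 - exp (-y)) / (1 - exp (-y*T))"
  have e1: "exp (-y*T) < exp (-y)" using y T by simp
  have n1: "0 < 1 - exp (-y)" using y by simp
  have n2: "0 < 1 - exp (-y*T)" using e1 n1 by linarith
  have r0: "0 < \<rho>" using n1 n2 by (simp add: \<rho>_def)
  have r1: "\<rho> < 1" using n2 e1 by (simp add: \<rho>_def)
  define L where "L = - ln \<rho>"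
  have L0: "0 < L" using r0 r1 by (simp add: L_def)
  define K where "K = nat \<lceil>y*T/L\<rceil> + 1"
  have K0: "0 < K" by (simp add: K_def)
  have "y*T/L \<le> real K" unfolding K_def by linarith
  hence "y*T \<le> real K * L" using L0 by (simp add: divide_le_eq)
  hence "y*(T/real K) \<le> L" using K0 by (simp add: divide_le_eq mult.commute)
  hence "exp (-L) \<le> exp (-y*(T/K))" by simp
  moreover have "exp (-L) = \<rho>" using r0 by (simp add: L_def)
  ultimately have "\<rho> \<le> exp (-y*(T/K))" by simp
  hence "\<rho> * (1 - exp (-y*T)) \<le> exp (-y*(T/K)) * (1 - exp (-y*T))"
    using n2 by (intro mult_right_mono) auto
  moreover have "\<rho> * (1 - exp (-y*T)) = 1 - exp (-y)" proof - have "\<And>a b::real. b \<noteq> 0 \<Longrightarrow> a / b * b = a" by simp thus ?thesis using n2 unfolding \<rho>_def by (metis less_irrefl) qed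
  moreover have "real K * (T / real K) = T" using K0 by simp
  ultimately show ?thesis using K0 by (intro exI[of _ K]) auto
qed

theorem corollary1:
  fixes V :: "'a set" and p :: "'a set \<Rightarrow> real" and M :: "'a set set \<Rightarrow> 'a set set"
    and u :: 'a and N :: "'a set" and \<alpha> :: real
  assumes "finite V"
    and "\<forall>e\<in>vpairs V. 0 \<le> p e \<and> p e \<le> 1"
    and "\<forall>H. H \<subseteq> vpairs V \<longrightarrow> is_max_matching H (M H)"
    and "u \<in> V" and "N \<subseteq> V - {u}" and "N \<noteq> {}"
    and "0 < \<alpha>" and "\<alpha> < 1"
    and "\<forall>v\<in>N. 0 < p {u, v} \<and> qstar V p M {u, v} / p {u, v} < \<alpha>"
    and "0 < (\<Sum>v\<in>N. qstar V p M {u, v})"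
  shows "\<exists>\<sigma> :: 'a list pmf. set_pmf \<sigma> \<subseteq> orderings N \<and>
           (\<forall>v\<in>N. measure_pmf.prob (pair_pmf \<sigma> (random_graph V p))
                      {(xs, H). first_edge u xs H = Some v}
                  \<ge> (let Q = (\<Sum>w\<in>N. qstar V p M {u, w}) in (1 - exp (- Q / \<alpha>)) / Q)
                      * qstar V p M {u, v})"
proof -
  define q where "q = (\<lambda>w. qstar V p M {u,w})"
  define x where "x = (\<lambda>w. q w / \<alpha>)"
  define y where "y = (\<Sum>w\<in>N. x w)"
  have finN: "finite N" using assms(1,5) finite_subset by blast
  have uw: "\<And>w. w\<in>N \<Longrightarrow> {u,w} \<in> vpairs V" using assms(4,5) by (auto intro!: upair_in_vpairs)
  have p01: "\<And>w. w\<in>N \<Longrightarrow> 0 \<le> p {u,w} \<and> p {u,w} \<le> 1" using assms(2) uw by blast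
  have ppos: "\<And>w. w\<in>N \<Longrightarrow> 0 < p {u,w}" using assms(9) by blast
  have q0: "\<And>w. 0 \<le> q w" by (simp add: q_def qstar_def)
  have x0: "\<And>w. 0 \<le> x w" using q0 assms(7) by (simp add: x_def)
  have xp: "x w < p {u,w}" if w: "w\<in>N" for w
  proof -
    have "q w / p {u,w} < \<alpha>" using assms(9) w by (simp add: q_def)
    hence "q w < \<alpha> * p {u,w}" using ppos[OF w] by (simp add: divide_less_eq mult.commute)
    thus ?thesis using assms(7) by (simp add: x_def divide_less_eq mult.commute)
  qed
  have Qy: "(\<Sum>w\<in>N. q w) = \<alpha> * y"
    using assms(7) by (simp add: y_def x_def sum_distrib_left)
  have y0: "0 < y" using assms(10) Qy assms(7) unfolding q_def
    by (simp add: zero_less_mult_iff)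
  define m where "m = Min ((\<lambda>w. p {u,w} - x w) ` N)"
  have m0: "0 < m" using finN assms(6) xp by (simp add: m_def)
  have mle: "\<And>w. w\<in>N \<Longrightarrow> m \<le> p {u,w} - x w" using finN by (simp add: m_def)
  define T where "T = 1 + m"
  have T1: "1 < T" using m0 by (simp add: T_def)
  have xT: "x w * T \<le> p {u,w}" if w: "w\<in>N" for w
  proof -
    have "x w \<le> 1" using xp[OF w] p01[OF w] by linarith
    hence "x w * m \<le> m" using m0 by (simp add: mult_left_le_one_le)
    thus ?thesis using mle[OF w] by (simp add: T_def algebra_simps)
  qed
  obtain K :: nat where K0: "0 < K"
    and Kkey: "exp (-y*(T/K)) * (1 - exp (-y*(real K*(T/K)))) \<ge> 1 - exp (-y)"
    using exK[OF y0 T1] by blast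
  define d where "d = T / K"
  have d0: "0 < d" using K0 T1 by (simp add: d_def)
  have Kd_eq: "real K * d = T" using K0 by (simp add: d_def)
  define a where "a = (\<lambda>w. exp (-x w * d))"
  have kdw: "kd K (a w) (p {u,w})" if w: "w \<in> N" for w
  proof
    show "0 < a w" by (simp add: a_def)
    show "a w \<le> 1" using x0[of w] d0 by (simp add: a_def)
    show "0 < p {u,w}" using ppos[OF w] .
    have "a w ^ K = exp (real K * (-x w * d))" unfolding a_def by (rule exp_of_nat_mult[symmetric])
    also have "\<dots> = exp (- (x w * T))" using Kd_eq[symmetric] by (simp add: algebra_simps)
    finally have "a w ^ K \<ge> 1 - x w * T" using exp_ge_add_one_self[of "- (x w * T)"] by simp
    thus "1 - a w ^ K \<le> p {u,w}" using xT[OF w] by linarith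
  qed
  define KP where "KP = Pi_pmf N 0 (\<lambda>w. Kd K (a w) (p {u,w}))"
  obtain xs0 where xs0: "distinct xs0" "set xs0 = N" using finite_distinct_list[OF finN] by blast
  define \<sigma> where "\<sigma> = map_pmf (\<lambda>k. sort_key k xs0) KP"
  show ?thesis
  proof (intro exI[of _ \<sigma>] conjI ballI)
    show "set_pmf \<sigma> \<subseteq> orderings N" using xs0 by (auto simp: \<sigma>_def orderings_def)
  next
    fix v assume v: "v \<in> N"
    define Bits where "Bits = Pi_pmf (vpairs V) False (\<lambda>e. bernoulli_pmf (p e))"
    define toH where "toH = (\<lambda>b. {e\<in>vpairs V. b e})"
    have G: "random_graph V p = map_pmf toH Bits" by (simp add: random_graph_def toH_def Bits_def)
    define E where "E = (\<lambda>j::nat. {(k::'a\<Rightarrow>nat,b::'a set\<Rightarrow>bool). k v = j \<and> b {u,v} \<and> (\<forall>w\<in>N-{v}. k w \<le> j \<longrightarrow> \<not> b {u,w})})"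
    define X where "X = {(xs, H). first_edge u xs H = Some v}"
    define \<Phi> where "\<Phi> = (\<lambda>(k::'a\<Rightarrow>nat,b). (sort_key k xs0, toH b))"
    have pair\<sigma>: "pair_pmf \<sigma> (random_graph V p) = map_pmf \<Phi> (pair_pmf KP Bits)"
      by (simp add: \<sigma>_def G map_pair \<Phi>_def)
    have sub: "(\<Union>j\<in>{..<K}. E j) \<subseteq> \<Phi> -` X"
    proof
      fix z assume "z \<in> (\<Union>j\<in>{..<K}. E j)"
      then obtain j k b where z: "z = (k,b)" and kv: "k v = j" and bv: "b {u,v}"
        and bw: "\<forall>w\<in>N-{v}. k w \<le> j \<longrightarrow> \<not> b {u,w}"
        by (auto simp: E_def)
      have "find (\<lambda>w. {u,w} \<in> toH b) (sort_key k xs0) = Some v"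
      proof (rule find_sorted)
        show "v \<in> set xs0" "distinct xs0" using xs0 v by auto
        show "{u,v} \<in> toH b" using uw[OF v] bv by (simp add: toH_def)
        fix w assume "w \<in> set xs0" "w \<noteq> v" "k w \<le> k v"
        thus "{u,w} \<notin> toH b" using bw kv xs0 by (auto simp: toH_def)
      qed
      thus "z \<in> \<Phi> -` X" by (simp add: z \<Phi>_def X_def first_edge_def)
    qed
    define f where "f = (\<lambda>(j::nat) w (t::nat). if w = v then (if t = j then p {u,w} else 0)
                    else (if t \<le> j then 1 - p {u,w} else (1::real)))"
    have PE: "measure_pmf.prob (pair_pmf KP Bits) (E j)
        = (exp(-x v * d)^j - exp(-x v * d)^Suc j) * exp(-(y-x v)*d)^Suc j" if j: "j < K" for j
    proof -
      have "measure_pmf.prob (pair_pmf KP Bits) (E j)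
          = measure_pmf.expectation KP (\<lambda>k. \<Prod>w\<in>N. f j w (k w))"
      proof (rule prob_pair_pmf_integral)
        fix k :: "'a \<Rightarrow> nat"
        have "{b. (k,b) \<in> E j} = {b. k v = j \<and> b {u,v} \<and> (\<forall>w\<in>N-{v}. k w \<le> j \<longrightarrow> \<not> b {u,w})}"
          by (simp add: E_def)
        thus "measure_pmf.prob Bits {b. (k,b) \<in> E j} = (\<Prod>w\<in>N. f j w (k w))"
          unfolding Bits_def f_def using bits_prob[OF assms(1,2,4,5) v, of k j] by simp
      next
        show "integrable (measure_pmf KP) (\<lambda>k. \<Prod>w\<in>N. f j w (k w))"
          unfolding KP_def using finN kdw by (intro integrable_prod_Pi_pmf) (auto intro: kd.integrable_Kd)
      qed
      also have "\<dots> = (\<Prod>w\<in>N. measure_pmf.expectation (Kd K (a w) (p {u,w})) (f j w))"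
        unfolding KP_def using finN p01 kdw by (intro expectation_prod_Pi_pmf) (auto intro: kd.integrable_Kd simp: f_def)
      also have "\<dots> = measure_pmf.expectation (Kd K (a v) (p {u,v})) (f j v) *
            (\<Prod>w\<in>N-{v}. measure_pmf.expectation (Kd K (a w) (p {u,w})) (f j w))"
        using finN v by (simp add: prod.remove)
      also have "measure_pmf.expectation (Kd K (a v) (p {u,v})) (f j v) = a v ^ j - a v ^ Suc j"
        using kd.E1[OF kdw[OF v] j] by (simp add: f_def)
      also have "(\<Prod>w\<in>N-{v}. measure_pmf.expectation (Kd K (a w) (p {u,w})) (f j w))
               = (\<Prod>w\<in>N-{v}. a w ^ Suc j)"
      proof (rule prod.cong[OF refl])
        fix w assume w: "w \<in> N - {v}"
        have "f j w = (\<lambda>t. if t \<le> j then 1 - p {u,w} else 1)" using w by (auto simp: f_def)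
        thus "measure_pmf.expectation (Kd K (a w) (p {u,w})) (f j w) = a w ^ Suc j"
          using kd.E2[OF kdw j] w by simp
      qed
      also have "(\<Prod>w\<in>N-{v}. a w ^ Suc j) = exp (-(y - x v)*d) ^ Suc j"
      proof -
        have "(\<Prod>w\<in>N-{v}. a w ^ Suc j) = (\<Prod>w\<in>N-{v}. a w) ^ Suc j" by (rule prod_power_distrib[symmetric])
        also have "(\<Prod>w\<in>N-{v}. a w) = exp (\<Sum>w\<in>N-{v}. -x w * d)" using finN by (simp add: a_def exp_sum)
        also have "(\<Sum>w\<in>N-{v}. -x w * d) = -(y - x v)*d"
        proof -
          have "(\<Sum>w\<in>N-{v}. x w) = y - x v" using finN v by (simp add: y_def sum_diff1)
          moreover have "(\<Sum>w\<in>N-{v}. -x w * d) = - (\<Sum>w\<in>N-{v}. x w) * d"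
            by (simp add: sum_negf sum_distrib_right)
          ultimately show ?thesis by simp
        qed
        finally show ?thesis .
      qed
      finally show ?thesis by (simp add: a_def)
    qed
    have "x v * (1 - exp (-y)) / y
        \<le> (\<Sum>j<K. (exp(-x v * d)^j - exp(-x v * d)^Suc j) * exp(-(y-x v)*d)^Suc j)"
      by (rule num_bound[OF x0 y0 d0]) (use Kkey in \<open>simp add: d_def\<close>)
    also have "\<dots> = (\<Sum>j<K. measure_pmf.prob (pair_pmf KP Bits) (E j))"
      by (simp add: PE)
    also have "\<dots> = measure_pmf.prob (pair_pmf KP Bits) (\<Union>j\<in>{..<K}. E j)"
      by (rule measure_pmf.finite_measure_finite_Union[symmetric])
         (auto simp: disjoint_family_on_def E_def)
    also have "\<dots> \<le> measure_pmf.prob (pair_pmf KP Bits) (\<Phi> -` X)"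
      by (rule measure_pmf.finite_measure_mono[OF sub]) simp
    also have "\<dots> = measure_pmf.prob (pair_pmf \<sigma> (random_graph V p)) X"
      by (simp add: pair\<sigma>)
    finally have main: "x v * (1 - exp (-y)) / y \<le> measure_pmf.prob (pair_pmf \<sigma> (random_graph V p)) X" .
    have "(let Q = (\<Sum>w\<in>N. qstar V p M {u, w}) in (1 - exp (- Q / \<alpha>)) / Q) * qstar V p M {u, v}
        = x v * (1 - exp (-y)) / y"
    proof -
      have Q: "(\<Sum>w\<in>N. qstar V p M {u, w}) = \<alpha> * y" using Qy by (simp add: q_def)
      have "(let Q = (\<Sum>w\<in>N. qstar V p M {u, w}) in (1 - exp (- Q / \<alpha>)) / Q) * qstar V p M {u, v}
          = (1 - exp (- (\<alpha> * y) / \<alpha>)) / (\<alpha> * y) * q v" by (simp only: Q Let_def q_def)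
      also have "\<dots> = x v * (1 - exp (-y)) / y" using assms(7) y0 by (simp add: x_def field_simps)
      finally show ?thesis .
    qed
    thus "(let Q = (\<Sum>w\<in>N. qstar V p M {u, w}) in (1 - exp (- Q / \<alpha>)) / Q) * qstar V p M {u, v}
        \<le> measure_pmf.prob (pair_pmf \<sigma> (random_graph V p)) {(xs, H). first_edge u xs H = Some v}"
      using main by (simp add: X_def)
  qed
qed

end
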